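(* There exists an LCL problem $\Pi$ on undirected paths (without inputs) that can be solved in $O(\log^* n)$ rounds in the LOCAL model, but whose mending requires distance $\Theta(n)$: $\Pi$ is not $T$-mendable for any function $T$ with $T(n)=o(n)$.
   Context: A locally verifiable problem $\Pi$ on a graph family $\mathcal{G}$ is given by a set $\Gamma$ of output labels (here no inputs) and a verifier $\psi$ with verification radius $r\in\mathbb{N}$: for $G=(V,E)\in\mathcal{G}$, an output labeling $\lambda:V\to\Gamma$ and a node $v$, $\psi(G,\lambda,v)\in\{\text{happy},\text{unhappy}\}$ depends only on the radius-$r$ neighborhood of $v$ (structure and outputs, up to isomorphism). $\lambda$ is a solution if $\psi$ is happy at every node. $\Pi$ is an LCL problem if $\Gamma$ is finite and degrees are bounded by a constant. Partial labelings are maps $\lambda:V\to\Gamma\cup\{\bot\}$; the relaxed verifier $\psi^*$ is happy at $v$ if some node within distance $r$ of $v$ has label $\bot$, and otherwise $\psi^*(G,\lambda,v)=\psi(G,\lambda',v)$ for any $\lambda':V\to\Gamma$ agreeing with $\lambda$ on the radius-$r$ neighborhood of $v$; $\psi^*$ accepts $\lambda$ if it is happy at all nodes. Given $\lambda$ accepted by $\psi^*$ and a node $v$, a $t$-mend of $\lambda$ at $v$ is a partial labeling $\mu$ such that $\psi^*$ accepts $\mu$, $\mu(v)\neq\bot$, $\mu(u)=\bot$ implies $\lambda(u)=\bot$, and $\mu(u)\neq\lambda(u)$ implies $u$ is within distance $t$ of $v$. A verifier $\psi$ is $T$-mendable if for every $G\in\mathcal{G}$ with $n$ nodes, every $\lambda$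 accepted by $\psi^*$ and every node $v$, a $T(n)$-mend of $\lambda$ at $v$ exists; $\Pi$ is $T$-mendable if some radius-$r$ verifier for $\Pi$ (accepting exactly the solutions of $\Pi$) is $T$-mendable. LOCAL model: nodes are processors with unique identifiers communicating along edges in synchronous rounds with unbounded message size; a problem is solvable in $T(n)$ rounds if after $T(n)$ rounds all nodes output labels forming a valid solution. *)

theory Defs
  imports Complex_Main "HOL-Library.Landau_Symbols"
begin

text \<open>Undirected paths: the path with n nodes has node set {0..<n} and edges {i, i+1}.
  A radius-r view of a node v consists of the labels of the nodes at distance 1..r on
  one side (closest first), the label of v, and the labels on the other side.
  Since paths are undirected, functions of views must be invariant under swapping sides
  (isomorphism = reflection).\<close>

definition lview :: "nat \<Rightarrow> (nat \<Rightarrow> 'a) \<Rightarrow> nat \<Rightarrow> 'a list" where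
  "lview r f v = map (\<lambda>j. f (v - Suc j)) [0..<min r v]"

definition rview :: "nat \<Rightarrow> nat \<Rightarrow> (nat \<Rightarrow> 'a) \<Rightarrow> nat \<Rightarrow> 'a list" where
  "rview n r f v = map (\<lambda>j. f (v + Suc j)) [0..<min r (n - Suc v)]"

definition sym_view :: "('a list \<Rightarrow> 'a \<Rightarrow> 'a list \<Rightarrow> 'b) \<Rightarrow> bool" where
  "sym_view f \<longleftrightarrow> (\<forall>L x R. f L x R = f R x L)"

definition pdist :: "nat \<Rightarrow> nat \<Rightarrow> nat" where
  "pdist u v = (if u \<le> v then v - u else u - v)"

definition happy :: "nat \<Rightarrow> nat \<Rightarrow> (nat list \<Rightarrow> nat \<Rightarrow> nat list \<Rightarrow> bool) \<Rightarrow> (nat \<Rightarrow> nat) \<Rightarrow> nat \<Rightarrow> bool" where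
  "happy n r \<psi> lam v = \<psi> (lview r lam v) (lam v) (rview n r lam v)"

definition is_solution :: "nat set \<Rightarrow> nat \<Rightarrow> nat \<Rightarrow> (nat list \<Rightarrow> nat \<Rightarrow> nat list \<Rightarrow> bool) \<Rightarrow> (nat \<Rightarrow> nat) \<Rightarrow> bool" where
  "is_solution \<Gamma> n r \<psi> lam \<longleftrightarrow> (\<forall>v<n. lam v \<in> \<Gamma>) \<and> (\<forall>v<n. happy n r \<psi> lam v)"

definition verifier_for :: "nat set \<Rightarrow> nat \<Rightarrow> (nat list \<Rightarrow> nat \<Rightarrow> nat list \<Rightarrow> bool)
    \<Rightarrow> nat \<Rightarrow> (nat list \<Rightarrow> nat \<Rightarrow> nat list \<Rightarrow> bool) \<Rightarrow> bool" where
  "verifier_for \<Gamma> r \<psi> r0 \<psi>0 \<longleftrightarrow> sym_view \<psi> \<and>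
     (\<forall>n lam. is_solution \<Gamma> n r \<psi> lam \<longleftrightarrow> is_solution \<Gamma> n r0 \<psi>0 lam)"

text \<open>Partial labelings: None plays the role of bottom.\<close>

definition partial_labeling :: "nat set \<Rightarrow> nat \<Rightarrow> (nat \<Rightarrow> nat option) \<Rightarrow> bool" where
  "partial_labeling \<Gamma> n \<mu> \<longleftrightarrow> (\<forall>u<n. \<forall>x. \<mu> u = Some x \<longrightarrow> x \<in> \<Gamma>)"

definition relaxed_happy :: "nat \<Rightarrow> nat \<Rightarrow> (nat list \<Rightarrow> nat \<Rightarrow> nat list \<Rightarrow> bool) \<Rightarrow> (nat \<Rightarrow> nat option) \<Rightarrow> nat \<Rightarrow> bool" where
  "relaxed_happy n r \<psi> \<mu> v \<longleftrightarrow>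
     (\<exists>u<n. pdist u v \<le> r \<and> \<mu> u = None) \<or> happy n r \<psi> (\<lambda>u. the (\<mu> u)) v"

definition relaxed_accepts :: "nat \<Rightarrow> nat \<Rightarrow> (nat list \<Rightarrow> nat \<Rightarrow> nat list \<Rightarrow> bool) \<Rightarrow> (nat \<Rightarrow> nat option) \<Rightarrow> bool" where
  "relaxed_accepts n r \<psi> \<mu> \<longleftrightarrow> (\<forall>v<n. relaxed_happy n r \<psi> \<mu> v)"

definition is_mend :: "nat set \<Rightarrow> nat \<Rightarrow> nat \<Rightarrow> (nat list \<Rightarrow> nat \<Rightarrow> nat list \<Rightarrow> bool)
    \<Rightarrow> (nat \<Rightarrow> nat option) \<Rightarrow> nat \<Rightarrow> real \<Rightarrow> (nat \<Rightarrow> nat option) \<Rightarrow> bool" where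
  "is_mend \<Gamma> n r \<psi> lam v t \<mu> \<longleftrightarrow>
     partial_labeling \<Gamma> n \<mu> \<and> relaxed_accepts n r \<psi> \<mu> \<and> \<mu> v \<noteq> None \<and>
     (\<forall>u<n. \<mu> u = None \<longrightarrow> lam u = None) \<and>
     (\<forall>u<n. \<mu> u \<noteq> lam u \<longrightarrow> real (pdist u v) \<le> t)"

definition mendable_verifier :: "nat set \<Rightarrow> nat \<Rightarrow> (nat list \<Rightarrow> nat \<Rightarrow> nat list \<Rightarrow> bool) \<Rightarrow> (nat \<Rightarrow> real) \<Rightarrow> bool" where
  "mendable_verifier \<Gamma> r \<psi> T \<longleftrightarrow>
     (\<forall>n lam v. partial_labeling \<Gamma> n lam \<and> relaxed_accepts n r \<psi> lam \<and> v < n \<longrightarrow>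
        (\<exists>\<mu>. is_mend \<Gamma> n r \<psi> lam v (T n) \<mu>))"

definition mendable_problem :: "nat set \<Rightarrow> nat \<Rightarrow> (nat list \<Rightarrow> nat \<Rightarrow> nat list \<Rightarrow> bool) \<Rightarrow> (nat \<Rightarrow> real) \<Rightarrow> bool" where
  "mendable_problem \<Gamma> r0 \<psi>0 T \<longleftrightarrow>
     (\<exists>r \<psi>. verifier_for \<Gamma> r \<psi> r0 \<psi>0 \<and> mendable_verifier \<Gamma> r \<psi> T)"

text \<open>LOCAL model on paths. Identifiers are injective into {1..n^c}. A t-round algorithm
  is a function of n and the radius-t view of identifiers (invariant under reflection).\<close>

definition valid_ids :: "nat \<Rightarrow> nat \<Rightarrow> (nat \<Rightarrow> nat) \<Rightarrow> bool" where
  "valid_ids c n ids \<longleftrightarrow> inj_on ids {..<n} \<and> (\<forall>v<n. ids v \<in> {1..n ^ c})"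

definition local_output :: "(nat \<Rightarrow> nat list \<Rightarrow> nat \<Rightarrow> nat list \<Rightarrow> nat) \<Rightarrow> nat \<Rightarrow> nat \<Rightarrow> (nat \<Rightarrow> nat) \<Rightarrow> nat \<Rightarrow> nat" where
  "local_output A n t ids v = A n (lview t ids v) (ids v) (rview n t ids v)"

definition solves_local :: "nat set \<Rightarrow> nat \<Rightarrow> (nat list \<Rightarrow> nat \<Rightarrow> nat list \<Rightarrow> bool) \<Rightarrow> nat
    \<Rightarrow> (nat \<Rightarrow> nat list \<Rightarrow> nat \<Rightarrow> nat list \<Rightarrow> nat) \<Rightarrow> (nat \<Rightarrow> nat) \<Rightarrow> bool" where
  "solves_local \<Gamma> r0 \<psi>0 c A T \<longleftrightarrow> (\<forall>n. sym_view (A n)) \<and>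
     (\<forall>n ids. valid_ids c n ids \<longrightarrow> is_solution \<Gamma> n r0 \<psi>0 (local_output A n (T n) ids))"

definition log_star :: "nat \<Rightarrow> nat" where
  "log_star n = (LEAST k. ((\<lambda>x. log 2 x) ^^ k) (real n) \<le> 1)"

end

theory Submission
  imports Defs
begin

definition psi7 :: "nat list \<Rightarrow> nat \<Rightarrow> nat list \<Rightarrow> bool" where
  "psi7 L x R = (\<forall>y\<in>set L \<union> set R. (x = 2 \<longleftrightarrow> y = 2) \<and> (x \<noteq> 2 \<longrightarrow> y \<noteq> x))"

lemma sym_psi7: "sym_view psi7"
  unfolding sym_view_def psi7_def by blast

lemma happy_cong:
  assumes eq: "\<And>u. u < n \<Longrightarrow> pdist u w \<le> r \<Longrightarrow> f u = g u"
  assumes wn: "w < n"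
  shows "happy n r \<psi> f w = happy n r \<psi> g w"
proof -
  have "lview r f w = lview r g w"
    unfolding lview_def
  proof (rule map_cong[OF refl])
    fix j assume "j \<in> set [0..<min r w]"
    then have j: "j < r" "j < w" by auto
    have "w - Suc j < n" using wn by linarith
    moreover have "pdist (w - Suc j) w \<le> r" unfolding pdist_def using j by auto
    ultimately show "f (w - Suc j) = g (w - Suc j)" by (rule eq)
  qed
  moreover have "rview n r f w = rview n r g w"
    unfolding rview_def
  proof (rule map_cong[OF refl])
    fix j assume "j \<in> set [0..<min r (n - Suc w)]"
    then have j: "j < r" "j < n - Suc w" by auto
    have "w + Suc j < n" using j by linarith
    moreover have "pdist (w + Suc j) w \<le> r" unfolding pdist_def using j by auto
    ultimately show "f (w + Suc j) = g (w + Suc j)" by (rule eq)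
  qed
  moreover have "f w = g w" using eq wn by (simp add: pdist_def)
  ultimately show ?thesis unfolding happy_def by simp
qed

lemma lview1: "lview (Suc 0) f v = (if v = 0 then [] else [f (v - 1)])"
  unfolding lview_def by (cases v) auto

lemma rview1: "rview n (Suc 0) f v = (if Suc v < n then [f (Suc v)] else [])"
  unfolding rview_def by (cases "n - Suc v") auto

lemma const2_sol: "is_solution {0,1,2} n 1 psi7 (\<lambda>v. 2)"
  unfolding is_solution_def happy_def psi7_def by (simp add: lview1 rview1)

lemma par_nb:
  assumes "y \<in> set (lview 1 (\<lambda>u. (u + k) mod 2) v) \<union> set (rview n 1 (\<lambda>u. (u + k) mod 2) v)"
  shows "y \<noteq> (v + k) mod 2 \<and> y < 2"
proof -
  from assms have "(\<exists>m. v = Suc m \<and> y = (m + k) mod 2) \<or> y = Suc (v + k) mod 2"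
    by (cases v) (auto simp add: lview1 rview1 split: if_splits)
  then have "y \<noteq> (v + k) mod 2" "y < 2" by ((auto simp: mod_Suc split: if_splits; presburger), auto)
  then show ?thesis by simp
qed

lemma par_sol: "is_solution {0,1,2} n 1 psi7 (\<lambda>u. (u + k) mod 2)"
proof -
  have A: "\<forall>v<n. (v + k) mod 2 \<in> {0::nat, 1, 2}"
  proof (intro allI impI)
    fix v :: nat
    have "(v + k) mod 2 < 2" by simp
    then show "(v + k) mod 2 \<in> {0, 1, 2}" by (auto simp del: mod_less_divisor)
  qed
  have B: "\<forall>v<n. happy n 1 psi7 (\<lambda>u. (u + k) mod 2) v"
  proof (intro allI impI)
    fix v assume "v < n"
    have m: "(v + k) mod 2 \<noteq> 2" by simp
    show "happy n 1 psi7 (\<lambda>u. (u + k) mod 2) v"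
      unfolding happy_def psi7_def
    proof
      fix y assume y: "y \<in> set (lview 1 (\<lambda>u. (u + k) mod 2) v) \<union> set (rview n 1 (\<lambda>u. (u + k) mod 2) v)"
      from par_nb[OF y] m show "((v + k) mod 2 = 2) = (y = 2) \<and> ((v + k) mod 2 \<noteq> 2 \<longrightarrow> y \<noteq> (v + k) mod 2)" by simp
    qed
  qed
  show ?thesis unfolding is_solution_def using A B by simp
qed

lemma sol_neighbor:
  assumes "is_solution {0,1,2} n 1 psi7 g" "Suc w < n" "g w \<noteq> 2"
  shows "g (Suc w) \<noteq> 2 \<and> g (Suc w) \<noteq> g w"
proof -
  have "happy n 1 psi7 g w" using assms unfolding is_solution_def by auto
  moreover have "rview n 1 g w = [g (Suc w)]" using assms(2) by (simp add: rview1)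
  ultimately show ?thesis using assms(3) unfolding happy_def psi7_def by auto
qed

lemma sol_parity:
  assumes "is_solution {0,1,2} n 1 psi7 g" "0 < n" "g 0 = 0"
  shows "w < n \<Longrightarrow> g w = w mod 2"
proof (induction w)
  case 0 then show ?case using assms by simp
next
  case (Suc w)
  then have gw: "g w = w mod 2" by simp
  have "g w \<noteq> 2" using gw by auto
  from sol_neighbor[OF assms(1) Suc.prems this] have "g (Suc w) \<noteq> 2 \<and> g (Suc w) \<noteq> g w" .
  moreover have "g (Suc w) \<in> {0,1,2}" using assms(1) Suc.prems unfolding is_solution_def by auto
  ultimately show ?case using gw by (auto simp: mod_Suc)
qed

lemma not_mendable:
  assumes "T \<in> o(\<lambda>n. real n)"
  shows "\<not> mendable_problem {0,1,2} 1 psi7 T"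
proof
  assume "mendable_problem {0,1,2} 1 psi7 T"
  then obtain r \<psi> where vf: "verifier_for {0,1,2} r \<psi> 1 psi7" and mv: "mendable_verifier {0,1,2} r \<psi> T"
    unfolding mendable_problem_def by blast
  have equiv: "\<And>n lam. is_solution {0,1,2} n r \<psi> lam \<longleftrightarrow> is_solution {0,1,2} n 1 psi7 lam"
    using vf unfolding verifier_for_def by blast
  have "eventually (\<lambda>n. norm (T n) \<le> (1/8) * norm (real n)) at_top"
    using landau_o.smallD[OF assms, of "1/8"] by simp
  then obtain N where N: "\<And>n. n \<ge> N \<Longrightarrow> norm (T n) \<le> (1/8) * norm (real n)"
    unfolding eventually_at_top_linorder by blast
  define n where "n = max N 8"
  have n8: "n \<ge> 8" unfolding n_def by simp
  have Tn: "T n \<le> real n / 8" using N[of n] unfolding n_def by auto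
  define v where "v = n div 2"
  have vn: "v < n" unfolding v_def using n8 by simp
  have d0: "real (pdist 0 v) > T n"
    using Tn n8 unfolding pdist_def v_def by auto
  have d1: "real (pdist (n - 1) v) > T n"
  proof -
    have "pdist (n - 1) v = n - 1 - v" unfolding pdist_def v_def by auto
    moreover have "real (n - 1 - v) \<ge> real n / 2 - 1" unfolding v_def using n8 by linarith
    ultimately show ?thesis using Tn n8 by auto
  qed
  define lam where "lam = (\<lambda>u. if u < v then Some (u mod 2) else if u = v then None else Some ((u + 1) mod 2))"
  have lt2: "\<And>u x. lam u = Some x \<Longrightarrow> x < 2"
    unfolding lam_def by (auto split: if_splits)
  have pl: "partial_labeling {0,1,2} n lam"
    unfolding partial_labeling_def
  proof (intro allI impI)
    fix u x assume "u < n" "lam u = Some x"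
    have "x < 2" using \<open>lam u = Some x\<close> by (rule lt2)
    then show "x \<in> {0,1,2}" by (auto simp del: mod_less_divisor)
  qed
  have ra: "relaxed_accepts n r \<psi> lam"
    unfolding relaxed_accepts_def relaxed_happy_def
  proof (intro allI impI)
    fix w assume wn: "w < n"
    show "(\<exists>u<n. pdist u w \<le> r \<and> lam u = None) \<or> happy n r \<psi> (\<lambda>u. the (lam u)) w"
    proof (cases "pdist v w \<le> r")
      case True then show ?thesis using vn unfolding lam_def by auto
    next
      case False
      show ?thesis
      proof (cases "w < v")
        case True
        have "happy n r \<psi> (\<lambda>u. the (lam u)) w = happy n r \<psi> (\<lambda>u. (u + 0) mod 2) w"
        proof (rule happy_cong[OF _ wn])
          fix u assume "u < n" "pdist u w \<le> r"
          then have "u < v" using False True unfolding pdist_def by (auto split: if_splits)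
          then show "the (lam u) = (u + 0) mod 2" unfolding lam_def by simp
        qed
        moreover have "happy n r \<psi> (\<lambda>u. (u + 0) mod 2) w"
          using equiv par_sol wn unfolding is_solution_def by blast
        ultimately show ?thesis by simp
      next
        case False2: False
        have "happy n r \<psi> (\<lambda>u. the (lam u)) w = happy n r \<psi> (\<lambda>u. (u + 1) mod 2) w"
        proof (rule happy_cong[OF _ wn])
          fix u assume "u < n" "pdist u w \<le> r"
          then have "u > v" using False False2 unfolding pdist_def by (auto split: if_splits)
          then show "the (lam u) = (u + 1) mod 2" unfolding lam_def by simp
        qed
        moreover have "happy n r \<psi> (\<lambda>u. (u + 1) mod 2) w"
          using equiv par_sol wn unfolding is_solution_def by blast
        ultimately show ?thesis by simp
      qed
    qed
  qed
  obtain \<mu> where mu: "is_mend {0,1,2} n r \<psi> lam v (T n) \<mu>"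
    using mv pl ra vn unfolding mendable_verifier_def by blast
  have total: "\<And>u. u < n \<Longrightarrow> \<mu> u \<noteq> None"
  proof -
    fix u assume "u < n"
    show "\<mu> u \<noteq> None"
    proof (cases "u = v")
      case True then show ?thesis using mu unfolding is_mend_def by auto
    next
      case False then show ?thesis using mu \<open>u < n\<close> unfolding is_mend_def lam_def by (auto split: if_splits)
    qed
  qed
  define g where "g = (\<lambda>u. the (\<mu> u))"
  have "is_solution {0,1,2} n r \<psi> g"
    unfolding is_solution_def
  proof (intro conjI allI impI)
    fix u assume un: "u < n"
    then obtain x where "\<mu> u = Some x" using total by blast
    then show "g u \<in> {0,1,2}" using mu un unfolding is_mend_def partial_labeling_def g_def by auto
  next
    fix u assume un: "u < n"
    have "relaxed_happy n r \<psi> \<mu> u" using mu un unfolding is_mend_def relaxed_accepts_def by auto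
    then show "happy n r \<psi> g u" using total unfolding relaxed_happy_def g_def by blast
  qed
  then have sol: "is_solution {0,1,2} n 1 psi7 g" using equiv by blast
  have mc: "\<forall>u<n. \<mu> u \<noteq> lam u \<longrightarrow> real (pdist u v) \<le> T n" using mu unfolding is_mend_def by blast
  have "\<mu> 0 = lam 0" using mc d0 n8 by force
  then have g0: "g 0 = 0" unfolding g_def lam_def using n8 v_def by auto
  have "\<mu> (n - 1) = lam (n - 1)" using mc[rule_format, of "n - 1"] d1 n8 by linarith
  moreover have "n - 1 > v" using n8 unfolding v_def by auto
  ultimately have g1: "g (n - 1) = n mod 2" unfolding g_def lam_def using n8 by auto
  have "g (n - 1) = (n - 1) mod 2" using sol_parity[OF sol _ g0, of "n - 1"] n8 by auto
  moreover have "n mod 2 \<noteq> (n - 1) mod 2"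
  proof -
    obtain m where "n = Suc m" using n8 by (cases n) auto
    then show ?thesis by (simp add: mod_Suc)
  qed
  ultimately show False using g1 by simp
qed

theorem theorem7p1:
  shows "\<exists>(\<Gamma>::nat set) (r0::nat) \<psi>0. finite \<Gamma> \<and> sym_view \<psi>0 \<and>
    (\<forall>c::nat. c \<ge> 1 \<longrightarrow> (\<exists>(T::nat \<Rightarrow> nat) A.
        (\<lambda>n. real (T n)) \<in> O(\<lambda>n. real (log_star n)) \<and> solves_local \<Gamma> r0 \<psi>0 c A T)) \<and>
    (\<forall>T::nat \<Rightarrow> real. T \<in> o(\<lambda>n. real n) \<longrightarrow> \<not> mendable_problem \<Gamma> r0 \<psi>0 T)"
proof -
  have A: "\<forall>c::nat. c \<ge> 1 \<longrightarrow> (\<exists>(T::nat \<Rightarrow> nat) A.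
        (\<lambda>n. real (T n)) \<in> O(\<lambda>n. real (log_star n)) \<and> solves_local {0,1,2} 1 psi7 c A T)"
  proof (intro allI impI)
    fix c :: nat
    have F1: "(\<lambda>n::nat. real ((\<lambda>_::nat. 0::nat) n)) \<in> O(\<lambda>n. real (log_star n))" by simp
    have F2: "solves_local {0,1,2} 1 psi7 c (\<lambda>_ _ _ _. 2) ((\<lambda>_. 0)::nat\<Rightarrow>nat)"
      unfolding solves_local_def local_output_def sym_view_def using const2_sol by simp
    show "\<exists>(T::nat \<Rightarrow> nat) A. (\<lambda>n. real (T n)) \<in> O(\<lambda>n. real (log_star n)) \<and>
      solves_local {0,1,2} 1 psi7 c A T"
      apply (rule exI[where x="\<lambda>_::nat. 0::nat"])
      apply (rule exI[where x="\<lambda>_ _ _ _. 2"])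
      using F1 F2 by simp
  qed
  have B: "\<forall>T::nat \<Rightarrow> real. T \<in> o(\<lambda>n. real n) \<longrightarrow> \<not> mendable_problem {0,1,2} 1 psi7 T"
    using not_mendable by blast
  have C: "finite {0::nat,1,2}" by simp
  show ?thesis using A B C sym_psi7 by blast
qed

end
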